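(* Let $G$ be a finite graph with $n$ vertices and maximum degree at most $\Delta$. For any $\epsilon>0$, taking $\lambda=e^{\frac{\Delta\log 2}{2\epsilon}}$, the average matching size $E(G,\lambda)$ is an $\epsilon n$-approximation of the maximum matching size of $G$, i.e. $|E(G,\lambda)-\mathrm{OPT}|\le\epsilon n$ where $\mathrm{OPT}$ is the size of a maximum matching.
   Context: For a finite graph $G$ and $\lambda>0$, $E(G,\lambda)=\sum_{M}|M|\lambda^{|M|}/Z(G,\lambda)$ with $Z(G,\lambda)=\sum_M\lambda^{|M|}$, both sums over all matchings $M$ of $G$. *)

theory Defs
  imports "HOL-Analysis.Analysis"
begin

definition simple_graph :: "'a set \<Rightarrow> 'a set set \<Rightarrow> bool" where
  "simple_graph V E \<longleftrightarrow> finite V \<and> (\<forall>e\<in>E. e \<subseteq> V \<and> card e = 2)"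

definition degree :: "'a set set \<Rightarrow> 'a \<Rightarrow> nat" where
  "degree E v = card {e \<in> E. v \<in> e}"

definition is_matching :: "'a set set \<Rightarrow> 'a set set \<Rightarrow> bool" where
  "is_matching E M \<longleftrightarrow> M \<subseteq> E \<and> (\<forall>e1\<in>M. \<forall>e2\<in>M. e1 \<noteq> e2 \<longrightarrow> e1 \<inter> e2 = {})"

definition matchings :: "'a set set \<Rightarrow> 'a set set set" where
  "matchings E = {M. is_matching E M}"

definition Zm :: "'a set set \<Rightarrow> real \<Rightarrow> real" where
  "Zm E lam = (\<Sum>M\<in>matchings E. lam ^ card M)"

definition avg_match :: "'a set set \<Rightarrow> real \<Rightarrow> real" where
  "avg_match E lam = (\<Sum>M\<in>matchings E. real (card M) * lam ^ card M) / Zm E lam"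

definition max_matching_size :: "'a set set \<Rightarrow> nat" where
  "max_matching_size E = Max (card ` matchings E)"

end

theory Submission
  imports Defs
begin

lemma jensen_like:
  fixes S :: "'b set" and k :: "'b \<Rightarrow> nat" and L :: real
  assumes fin: "finite S" and Zpos: "(\<Sum>M\<in>S. exp (L * k M)) > 0"
  defines "Z \<equiv> (\<Sum>M\<in>S. exp (L * k M))"
  defines "A \<equiv> (\<Sum>M\<in>S. real (k M) * exp (L * k M)) / Z"
  shows "real (card S) \<ge> Z * exp (- L * A)"
proof -
  have ZA: "(\<Sum>M\<in>S. real (k M) * exp (L * k M)) = A * Z"
    using Zpos unfolding A_def Z_def by simp
  have "real (card S) = (\<Sum>M\<in>S. exp (L * k M) * exp (- L * A) * exp (- L * (k M - A)))"
    by (simp add: exp_add[symmetric] algebra_simps)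
  also have "\<dots> \<ge> (\<Sum>M\<in>S. exp (L * k M) * exp (- L * A) * (1 - L * (k M - A)))"
  proof (rule sum_mono)
    fix M assume "M \<in> S"
    have "1 - L * (k M - A) \<le> exp (- L * (k M - A))"
      using exp_ge_add_one_self[of "- L * (k M - A)"] by simp
    then show "exp (L * k M) * exp (- L * A) * (1 - L * (k M - A))
       \<le> exp (L * k M) * exp (- L * A) * exp (- L * (k M - A))"
      by (intro mult_left_mono) auto
  qed
  moreover have "(\<Sum>M\<in>S. exp (L * k M) * exp (- L * A) * (1 - L * (k M - A)))
      = exp (- L * A) * (Z - L * ((\<Sum>M\<in>S. real (k M) * exp (L * k M)) - A * Z))"
    unfolding Z_def
    by (simp add: algebra_simps sum_subtractf sum.distrib sum_distrib_left sum_distrib_right)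
  ultimately show ?thesis using ZA by (simp add: mult.commute)
qed

lemma handshake:
  assumes "simple_graph V E"
  shows "(\<Sum>v\<in>V. degree E v) = 2 * card E"
proof -
  have fV: "finite V" using assms unfolding simple_graph_def by auto
  have sub: "E \<subseteq> Pow V" using assms unfolding simple_graph_def by auto
  hence fE: "finite E" using fV by (simp add: finite_subset)
  have "(\<Sum>v\<in>V. degree E v) = (\<Sum>v\<in>V. \<Sum>e\<in>E. if v \<in> e then 1 else 0)"
    unfolding degree_def using fE by (simp add: sum.If_cases Int_def)
  also have "\<dots> = (\<Sum>e\<in>E. \<Sum>v\<in>V. if v \<in> e then 1 else 0)"
    by (rule sum.swap)
  also have "\<dots> = (\<Sum>e\<in>E. card e)"
  proof (rule sum.cong[OF refl])
    fix e assume "e \<in> E"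
    hence "e \<subseteq> V" using sub by auto
    hence "V \<inter> e = e" by auto
    thus "(\<Sum>v\<in>V. if v \<in> e then 1 else 0) = card e"
      by (simp add: sum.If_cases fV)
  qed
  also have "\<dots> = (\<Sum>e\<in>E. 2)"
    using assms unfolding simple_graph_def by (intro sum.cong) auto
  finally show ?thesis by simp
qed

theorem lemma6:
  fixes V :: "'a set" and E :: "'a set set" and \<Delta> :: nat and \<epsilon> :: real
  assumes "simple_graph V E"
    and "\<forall>v\<in>V. degree E v \<le> \<Delta>"
    and "\<epsilon> > 0"
  shows "\<bar>avg_match E (exp (real \<Delta> * ln 2 / (2 * \<epsilon>))) - real (max_matching_size E)\<bar>
           \<le> \<epsilon> * real (card V)"
proof -
  define L where "L = real \<Delta> * ln 2 / (2 * \<epsilon>)"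
  have L0: "L \<ge> 0" using assms(3) unfolding L_def by simp
  have fV: "finite V" using assms(1) unfolding simple_graph_def by auto
  have sub: "E \<subseteq> Pow V" using assms(1) unfolding simple_graph_def by auto
  hence fE: "finite E" using fV by (simp add: finite_subset)
  define S where "S = matchings E"
  have SP: "S \<subseteq> Pow E" unfolding S_def matchings_def is_matching_def by auto
  have fS: "finite S" using SP fE by (simp add: finite_subset)
  have eS: "{} \<in> S" unfolding S_def matchings_def is_matching_def by auto
  have cardS: "card S \<le> 2 ^ card E"
    using card_mono[OF _ SP] fE by (simp add: card_Pow)
  define m where "m = max_matching_size E"
  have mS: "m \<in> card ` S" unfolding m_def max_matching_size_def S_def[symmetric]
    using fS eS by (intro Max_in) auto
  have mge: "\<And>M. M \<in> S \<Longrightarrow> card M \<le> m" unfolding m_def max_matching_size_def S_def[symmetric]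
    using fS by auto
  have mE: "m \<le> card E" using mS SP fE by (auto intro: card_mono)
  have pw: "\<And>M. exp L ^ card M = exp (L * card M)"
    by (simp add: exp_of_nat_mult[symmetric] mult.commute)
  define Z where "Z = (\<Sum>M\<in>S. exp (L * card M))"
  define A where "A = (\<Sum>M\<in>S. real (card M) * exp (L * card M)) / Z"
  have Zm: "Z \<ge> exp (L * m)"
  proof -
    obtain M where "M \<in> S" "card M = m" using mS by auto
    thus ?thesis unfolding Z_def using fS
      by (metis (no_types, lifting) exp_ge_zero member_le_sum)
  qed
  have Zpos: "Z > 0" using Zm by (meson exp_gt_zero less_le_trans)
  have avg: "avg_match E (exp L) = A"
    unfolding avg_match_def Zm_def A_def Z_def S_def pw by simp
  have A0: "A \<ge> 0" unfolding A_def using Zpos by (intro divide_nonneg_pos sum_nonneg) auto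
  have Am: "A \<le> m"
  proof -
    have "(\<Sum>M\<in>S. real (card M) * exp (L * card M)) \<le> (\<Sum>M\<in>S. real m * exp (L * card M))"
      using mge by (intro sum_mono mult_right_mono) auto
    also have "\<dots> = m * Z" unfolding Z_def by (simp add: sum_distrib_left)
    finally show ?thesis unfolding A_def using Zpos by (simp add: divide_le_eq)
  qed
  have J: "real (card S) \<ge> Z * exp (- L * A)"
    using jensen_like[of S L card] fS Zpos unfolding Z_def A_def by simp
  have "exp (L * (m - A)) \<le> Z * exp (- L * A)"
  proof -
    have "exp (L * (m - A)) = exp (L * m) * exp (- L * A)"
      by (simp add: exp_add[symmetric] algebra_simps)
    thus ?thesis using Zm by simp
  qed
  also have "\<dots> \<le> real (card S)" by (rule J)
  also have "\<dots> \<le> 2 ^ card E" using cardS by (metis of_nat_le_iff of_nat_numeral of_nat_power)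
  also have "\<dots> = exp (card E * ln 2)" by (simp add: exp_of_nat_mult)
  finally have key: "L * (m - A) \<le> card E * ln 2" by simp
  have hs: "2 * card E \<le> card V * \<Delta>"
  proof -
    have "2 * card E = (\<Sum>v\<in>V. degree E v)" using handshake[OF assms(1)] by simp
    also have "\<dots> \<le> (\<Sum>v\<in>V. \<Delta>)" using assms(2) by (intro sum_mono) auto
    finally show ?thesis by simp
  qed
  have "m - A \<le> \<epsilon> * card V"
  proof (cases "\<Delta> = 0")
    case True
    hence "card E = 0" using hs by simp
    hence "m = 0" using mE by simp
    moreover have "0 \<le> \<epsilon> * real (card V)" using assms(3) by simp
    ultimately show ?thesis using A0 by simp
  next
    case False
    have Lp: "L > 0" using False assms(3) unfolding L_def by simp
    have "L * (m - A) \<le> real (card V * \<Delta>) / 2 * ln 2"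
    proof -
      have "real (card E) \<le> real (card V * \<Delta>) / 2"
      proof -
        have "real (2 * card E) \<le> real (card V * \<Delta>)" using hs by (rule of_nat_mono)
        thus ?thesis by simp
      qed
      hence "real (card E) * ln 2 \<le> real (card V * \<Delta>) / 2 * ln 2"
        by (rule mult_right_mono) simp
      thus ?thesis using key by linarith
    qed
    also have "\<dots> = L * (\<epsilon> * card V)" unfolding L_def using assms(3) by (simp add: field_simps)
    finally show ?thesis using Lp by simp
  qed
  thus ?thesis using Am avg unfolding m_def L_def by simp
qed

end
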